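(* Let $H$ be a separable real Hilbert space and $T>0$. On the space of $H$-valued, adapted, càdlàg processes on $[0,T]$, define $$\rho^{\mathrm{em}}_T(X,Y)=\sup_{\Gamma\in\mathcal S^{1,\mathrm{op}}_{\mathrm{prd}}}E\Big[\Big\|\Gamma(0)(X-Y)(0)+\int_{(0,T]}\Gamma(s)\,\mathrm d(X-Y)(s)\Big\|\wedge1\Big].$$ Then $\rho^{\mathrm{em}}_T$ and $d^{\mathrm{em}}_T$ generate the same topology on this space.
   Context: The filtered probability space $(\Omega,\mathcal A,(\mathcal F_t),P)$ is complete. $\mathcal S^{1,\mathrm{op}}_{\mathrm{prd}}=\mathcal S^{1,\mathrm{op}}_{\mathrm{prd}}(H)$ is the set of processes $\Gamma(\omega,t)=\Gamma_0(\omega)1_{\{0\}}(t)+\sum_{i=1}^{n-1}\big(\sum_{k=1}^{N(i)}O_{i,k}1_{A_{i,k}}(\omega)\big)1_{(t_i,t_{i+1}]}(t)$, where $\Gamma_0$ is an $\mathcal F_0$-measurable $L(H)$-valued random variable, $0=t_1<\dots<t_n=T$, $A_{i,k}\in\mathcal F_{t_i}$, $O_{i,k}\in L(H)$, and $\sup_{(\omega,t)}\|\Gamma(\omega,t)\|_{H\to H}\le1$. For an $H$-valued càdlàg process $X$, $\int_{(0,t]}\Gamma\,\mathrm dX:=\sum_{i=1}^{n-1}\big(\sum_kO_{i,k}1_{A_{i,k}}\big)(X(t_{i+1}\wedge t)-X(t_i\wedge t))$, and $d^{\mathrm{em}}_T(X,Y)=\sup_{\Gamma\in\mathcal S^{1,\mathrm{op}}_{\mathrm{prd}}}E\big[\sup_{t\in[0,T]}\|\Gamma(0)(X-Y)(0)+\int_{(0,t]}\Gamma\,\mathrm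 d(X-Y)\|\wedge1\big]$. *)

theory Defs
  imports "HOL-Probability.Probability"
begin

text \<open>Simple predictable operator-valued integrands are encoded by their data:
  (G0, n, tt, L) where G0 = Gamma_0 (an F_0-measurable L(H)-valued random variable),
  tt 0 = 0 < tt 1 < ... < tt (n-1) = T are the grid points (the paper's t_1,...,t_n,
  shifted to 0-based indexing), and L i is the finite list of pairs (O_{i,k}, A_{i,k}),
  k = 1..N(i), for the interval (tt i, tt (i+1)].\<close>

type_synonym ('w, 'h) sprd_data =
  "('w \<Rightarrow> ('h \<Rightarrow>\<^sub>L 'h)) \<times> nat \<times> (nat \<Rightarrow> real) \<times> (nat \<Rightarrow> (('h \<Rightarrow>\<^sub>L 'h) \<times> 'w set) list)"

definition step_val :: "(('h::real_normed_vector \<Rightarrow>\<^sub>L 'h) \<times> 'w set) list \<Rightarrow> 'w \<Rightarrow> ('h \<Rightarrow>\<^sub>L 'h)" where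
  "step_val l w = (\<Sum>p\<leftarrow>l. indicator (snd p) w *\<^sub>R fst p)"

definition sprd_op ::
  "'w measure \<Rightarrow> (real \<Rightarrow> 'w measure) \<Rightarrow> real \<Rightarrow> ('w, 'h::real_normed_vector) sprd_data \<Rightarrow> bool" where
  "sprd_op M F T D \<longleftrightarrow> (case D of (G0, n, tt, L) \<Rightarrow>
      G0 \<in> borel_measurable (F 0) \<and>
      2 \<le> n \<and> tt 0 = 0 \<and> tt (n - 1) = T \<and>
      (\<forall>i. Suc i < n \<longrightarrow> tt i < tt (Suc i)) \<and>
      (\<forall>i. Suc i < n \<longrightarrow> (\<forall>p\<in>set (L i). snd p \<in> sets (F (tt i)))) \<and>
      (\<forall>w\<in>space M. norm (G0 w) \<le> 1) \<and>
      (\<forall>i. Suc i < n \<longrightarrow> (\<forall>w\<in>space M. norm (step_val (L i) w) \<le> 1)))"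

definition sprd_int ::
  "('w, 'h::real_normed_vector) sprd_data \<Rightarrow> ('w \<Rightarrow> real \<Rightarrow> 'h) \<Rightarrow> 'w \<Rightarrow> real \<Rightarrow> 'h" where
  "sprd_int D X w t = (case D of (G0, n, tt, L) \<Rightarrow>
      blinfun_apply (G0 w) (X w 0) +
      (\<Sum>i<n - 1. blinfun_apply (step_val (L i) w)
                    (X w (min (tt (Suc i)) t) - X w (min (tt i) t))))"

definition cadlag_on :: "real \<Rightarrow> (real \<Rightarrow> 'h::topological_space) \<Rightarrow> bool" where
  "cadlag_on T f \<longleftrightarrow>
     (\<forall>t\<in>{0..<T}. (f \<longlongrightarrow> f t) (at_right t)) \<and>
     (\<forall>t\<in>{0<..T}. \<exists>l. (f \<longlongrightarrow> l) (at_left t))"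

definition adapted_cadlag ::
  "'w measure \<Rightarrow> (real \<Rightarrow> 'w measure) \<Rightarrow> real \<Rightarrow> ('w \<Rightarrow> real \<Rightarrow> 'h::real_normed_vector) set" where
  "adapted_cadlag M F T = {X. (\<forall>t\<in>{0..T}. (\<lambda>w. X w t) \<in> borel_measurable (F t)) \<and>
                             (\<forall>w\<in>space M. cadlag_on T (X w))}"

definition d_em ::
  "'w measure \<Rightarrow> (real \<Rightarrow> 'w measure) \<Rightarrow> real \<Rightarrow> ('w \<Rightarrow> real \<Rightarrow> 'h::real_normed_vector)
     \<Rightarrow> ('w \<Rightarrow> real \<Rightarrow> 'h) \<Rightarrow> real" where
  "d_em M F T X Y = (SUP D\<in>{D. sprd_op M F T D}.
      integral\<^sup>L M (\<lambda>w. SUP t\<in>{0..T}. min (norm (sprd_int D (\<lambda>w s. X w s - Y w s) w t)) 1))"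

definition rho_em ::
  "'w measure \<Rightarrow> (real \<Rightarrow> 'w measure) \<Rightarrow> real \<Rightarrow> ('w \<Rightarrow> real \<Rightarrow> 'h::real_normed_vector)
     \<Rightarrow> ('w \<Rightarrow> real \<Rightarrow> 'h) \<Rightarrow> real" where
  "rho_em M F T X Y = (SUP D\<in>{D. sprd_op M F T D}.
      integral\<^sup>L M (\<lambda>w. min (norm (sprd_int D (\<lambda>w s. X w s - Y w s) w T)) 1))"

definition pm_open :: "'a set \<Rightarrow> ('a \<Rightarrow> 'a \<Rightarrow> real) \<Rightarrow> 'a set \<Rightarrow> bool" where
  "pm_open C d U \<longleftrightarrow> U \<subseteq> C \<and> (\<forall>x\<in>U. \<exists>e>0. \<forall>y\<in>C. d x y < e \<longrightarrow> y \<in> U)"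

end

theory Submission
  imports Defs
begin


lemma meas2_sep:
  fixes \<phi> :: "'a::metric_space \<Rightarrow> 'h::metric_space \<Rightarrow> 'c::metric_space"
    and f :: "'w \<Rightarrow> 'a" and x :: "'w \<Rightarrow> 'h"
  assumes sep: "\<exists>D::'h set. countable D \<and> closure D = UNIV"
  and cont: "continuous_on UNIV (\<lambda>p. \<phi> (fst p) (snd p))"
  and G: "f \<in> borel_measurable N" and x: "x \<in> borel_measurable N"
  shows "(\<lambda>w. \<phi> (f w) (x w)) \<in> borel_measurable N"
proof -
  obtain D :: "'h set" where D: "countable D" "closure D = UNIV" using sep by blast
  have Dne: "D \<noteq> {}" using D by auto
  define d where "d = from_nat_into D"
  have dD: "range d = D" using D Dne by (simp add: d_def)
  have dens: "\<exists>k. dist (d k) y < r" if rp: "r > 0" for y r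
  proof -
    have "y \<in> closure D" using D by auto
    then obtain z where "z \<in> D" "dist z y < r" using rp closure_approachable[THEN iffD1] by blast
    then show ?thesis using dD by auto
  qed
  have [measurable]: "(\<lambda>w. dist (d i) (x w)) \<in> borel_measurable N" for i
    by (rule measurable_compose[OF x borel_measurable_continuous_onI]) (intro continuous_intros)
  define k where "k n w = (LEAST k. dist (d k) (x w) < 1 / Suc n)" for n w
  have km: "k n \<in> measurable N (count_space UNIV)" for n
    unfolding k_def by measurable
  have c1: "continuous_on UNIV (\<lambda>a. \<phi> a y)" for y
  proof -
    have "continuous_on UNIV (\<lambda>a. (a, y))" by (intro continuous_intros)
    from continuous_on_compose2[OF cont this] show ?thesis by simp
  qed
  have fm: "(\<lambda>w. \<phi> (f w) (d (k n w))) \<in> borel_measurable N" for n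
  proof (rule measurable_compose_countable'[where I=UNIV and g="k n" and f="\<lambda>i w. \<phi> (f w) (d i)"])
    fix i :: nat
    show "(\<lambda>w. \<phi> (f w) (d i)) \<in> borel_measurable N"
      by (rule measurable_compose[OF G borel_measurable_continuous_onI]) (rule c1)
  qed (use km in auto)
  show ?thesis
  proof (rule borel_measurable_LIMSEQ_metric[OF fm])
    fix w assume "w \<in> space N"
    have "dist (d (k n w)) (x w) < 1 / Suc n" for n
      unfolding k_def by (rule LeastI_ex) (use dens in auto)
    then have "norm (dist (d (k n w)) (x w)) \<le> inverse (real (Suc n))" for n
      by (simp add: inverse_eq_divide less_imp_le)
    then have "(\<lambda>n. dist (d (k n w)) (x w)) \<longlonglongrightarrow> 0"
      by (intro Lim_null_comparison[OF _ LIMSEQ_inverse_real_of_nat] always_eventually) blast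
    then have "(\<lambda>n. d (k n w)) \<longlonglongrightarrow> x w"
      by (rule tendsto_dist_iff[THEN iffD2])
    then have "(\<lambda>n. (f w, d (k n w))) \<longlonglongrightarrow> (f w, x w)"
      by (intro tendsto_Pair tendsto_const)
    moreover have "isCont (\<lambda>p. \<phi> (fst p) (snd p)) (f w, x w)"
      using cont by (simp add: continuous_on_eq_continuous_at del: isCont_Pair)
    ultimately have "(\<lambda>n. (\<lambda>p. \<phi> (fst p) (snd p)) (f w, d (k n w))) \<longlonglongrightarrow> (\<lambda>p. \<phi> (fst p) (snd p)) (f w, x w)"
      by (rule isCont_tendsto_compose[rotated])
    then show "(\<lambda>n. \<phi> (f w) (d (k n w))) \<longlonglongrightarrow> \<phi> (f w) (x w)" by (simp only: fst_conv snd_conv)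
  qed
qed

context
  fixes N :: "'w measure"
  assumes sepH: "\<exists>D::'h::real_normed_vector set. countable D \<and> closure D = UNIV"
begin

lemma meas_add_sep:
  fixes f g :: "'w \<Rightarrow> 'h"
  assumes "f \<in> borel_measurable N" "g \<in> borel_measurable N"
  shows "(\<lambda>w. f w + g w) \<in> borel_measurable N"
  by (rule meas2_sep[OF sepH _ assms, where \<phi>="(+)"]) (intro continuous_intros)

lemma meas_diff_sep:
  fixes f g :: "'w \<Rightarrow> 'h"
  assumes "f \<in> borel_measurable N" "g \<in> borel_measurable N"
  shows "(\<lambda>w. f w - g w) \<in> borel_measurable N"
  by (rule meas2_sep[OF sepH _ assms, where \<phi>="(-)"]) (intro continuous_intros)

lemma meas_scaleR_sep:
  fixes f :: "'w \<Rightarrow> real" and g :: "'w \<Rightarrow> 'h"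
  assumes "f \<in> borel_measurable N" "g \<in> borel_measurable N"
  shows "(\<lambda>w. f w *\<^sub>R g w) \<in> borel_measurable N"
  by (rule meas2_sep[OF sepH _ assms, where \<phi>="(*\<^sub>R)"]) (intro continuous_intros)

lemma meas_blinfun_sep:
  fixes f :: "'w \<Rightarrow> ('h \<Rightarrow>\<^sub>L 'h)" and g :: "'w \<Rightarrow> 'h"
  assumes "f \<in> borel_measurable N" "g \<in> borel_measurable N"
  shows "(\<lambda>w. blinfun_apply (f w) (g w)) \<in> borel_measurable N"
  by (rule meas2_sep[OF sepH _ assms, where \<phi>="blinfun_apply"]) (intro continuous_intros)

lemma meas_sum_sep:
  fixes f :: "'i \<Rightarrow> 'w \<Rightarrow> 'h"
  assumes "finite S" "\<And>i. i \<in> S \<Longrightarrow> f i \<in> borel_measurable N"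
  shows "(\<lambda>w. \<Sum>i\<in>S. f i w) \<in> borel_measurable N"
  using assms
proof (induction S rule: finite_induct)
  case empty then show ?case by simp
next
  case (insert a S)
  then show ?case by (simp add: meas_add_sep)
qed

end



lemma tt_less:
  assumes mono: "\<forall>i. Suc i < n \<longrightarrow> tt i < (tt (Suc i) :: real)" and "i < j" "j < n"
  shows "tt i < tt j"
  using assms(2,3)
proof (induction j)
  case 0 then show ?case by simp
next
  case (Suc j)
  then have "tt j < tt (Suc j)" using mono by blast
  moreover have "i < j \<Longrightarrow> tt i < tt j" using Suc by simp
  ultimately show ?case using Suc.prems by (cases "i = j") auto
qed

lemma tt_le:
  assumes mono: "\<forall>i. Suc i < n \<longrightarrow> tt i < (tt (Suc i) :: real)" and "i \<le> j" "j < n"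
  shows "tt i \<le> tt j"
  using tt_less[OF mono, of i j] assms by (cases "i = j") auto

lemma interval_find:
  assumes mono: "\<forall>i. Suc i < n \<longrightarrow> tt i < (tt (Suc i) :: real)"
    and "tt 0 \<le> t" "t < tt (n - 1)"
  shows "\<exists>i. Suc i < n \<and> tt i \<le> t \<and> t < tt (Suc i)"
proof -
  define j0 where "j0 = (LEAST j. t < tt j)"
  have j0: "t < tt j0" unfolding j0_def by (rule LeastI) (rule assms(3))
  have j0le: "j0 \<le> n - 1" unfolding j0_def by (rule Least_le) (rule assms(3))
  have "j0 \<noteq> 0"
  proof
    assume "j0 = 0" then show False using j0 assms(2) by simp
  qed
  then obtain i where i: "j0 = Suc i" by (cases j0) auto
  have "i < j0" using i by simp
  from not_less_Least[OF this[unfolded j0_def]] have "\<not> t < tt i" .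
  moreover have "n \<noteq> 0" using j0le i assms by (cases n) auto
  ultimately show ?thesis using i j0 j0le by (intro exI[of _ i]) auto
qed

lemma sprd_int_incr:
  fixes Z :: "'w \<Rightarrow> real \<Rightarrow> 'h::real_normed_vector"
  assumes mono: "\<forall>i. Suc i < n \<longrightarrow> tt i < tt (Suc i)" and i: "Suc i < n"
    and ab: "tt i \<le> a" "a \<le> b" "b \<le> tt (Suc i)"
  shows "sprd_int (G0,n,tt,L) Z w b - sprd_int (G0,n,tt,L) Z w a
       = blinfun_apply (step_val (L i) w) (Z w b - Z w a)"
proof -
  have tm: "blinfun_apply (step_val (L k) w) (Z w (min (tt (Suc k)) b) - Z w (min (tt k) b))
     - blinfun_apply (step_val (L k) w) (Z w (min (tt (Suc k)) a) - Z w (min (tt k) a))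
     = (if k = i then blinfun_apply (step_val (L i) w) (Z w b - Z w a) else 0)"
    if k: "k < n - 1" for k
  proof (cases "k < i")
    case True
    then have "tt (Suc k) \<le> tt i" using tt_le[OF mono, of "Suc k" i] i by auto
    moreover have "tt k \<le> tt (Suc k)" using mono k by (simp add: less_imp_le)
    ultimately have "tt (Suc k) \<le> a" "tt k \<le> a" "tt (Suc k) \<le> b" "tt k \<le> b" using ab by linarith+
    then have "min (tt (Suc k)) b = tt (Suc k)" "min (tt (Suc k)) a = tt (Suc k)"
      "min (tt k) b = tt k" "min (tt k) a = tt k" by (simp_all add: min_def)
    then show ?thesis using True by simp
  next
    case False
    show ?thesis
    proof (cases "k = i")
      case True
      then have "min (tt (Suc k)) b = b" "min (tt (Suc k)) a = a"
        "min (tt k) b = tt k" "min (tt k) a = tt k" using ab by (simp_all add: min_def)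
      then show ?thesis using True by (simp add: blinfun.diff_right)
    next
      case False
      with \<open>\<not> k < i\<close> have "Suc i \<le> k" by simp
      then have "tt (Suc i) \<le> tt k" using tt_le[OF mono, of "Suc i" k] k by auto
      moreover have "tt k \<le> tt (Suc k)" using mono k by (simp add: less_imp_le)
      ultimately have "b \<le> tt k" "b \<le> tt (Suc k)" "a \<le> tt k" "a \<le> tt (Suc k)" using ab by linarith+
      then have "min (tt (Suc k)) b = b" "min (tt (Suc k)) a = a"
        "min (tt k) b = b" "min (tt k) a = a" by (simp_all add: min_def)
      then show ?thesis using False by simp
    qed
  qed
  have "sprd_int (G0,n,tt,L) Z w b - sprd_int (G0,n,tt,L) Z w a
     = (\<Sum>k<n - 1. blinfun_apply (step_val (L k) w) (Z w (min (tt (Suc k)) b) - Z w (min (tt k) b))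
     - blinfun_apply (step_val (L k) w) (Z w (min (tt (Suc k)) a) - Z w (min (tt k) a)))"
    by (simp only: sprd_int_def prod.case add_diff_cancel_left sum_subtractf[symmetric])
  also have "\<dots> = (\<Sum>k<n - 1. (if k = i then blinfun_apply (step_val (L i) w) (Z w b - Z w a) else 0))"
    by (rule sum.cong[OF refl], rule tm) simp
  also have "\<dots> = blinfun_apply (step_val (L i) w) (Z w b - Z w a)"
  proof -
    have "i < n - 1" using i by linarith
    then show ?thesis by (simp only: sum.delta[OF finite_lessThan] lessThan_iff if_True)
  qed
  finally show ?thesis .
qed

lemma sprd_int_zero:
  fixes Z :: "'w \<Rightarrow> real \<Rightarrow> 'h::real_normed_vector"
  assumes mono: "\<forall>i. Suc i < n \<longrightarrow> tt i < tt (Suc i)" and t0: "tt 0 = 0"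
  shows "sprd_int (G0,n,tt,L) Z w 0 = blinfun_apply (G0 w) (Z w 0)"
proof -
  have nn: "0 \<le> tt k" if "k < n" for k using tt_le[OF mono, of 0 k] that t0 by auto
  have m0: "min (tt k) 0 = 0" if "k < n" for k using nn[OF that] by (simp add: min_def)
  have "(\<Sum>i<n - 1. blinfun_apply (step_val (L i) w) (Z w (min (tt (Suc i)) 0) - Z w (min (tt i) 0))) = 0"
  proof (rule sum.neutral, rule ballI)
    fix k assume "k \<in> {..<n - 1}"
    then have "Suc k < n" "k < n" by auto
    then show "blinfun_apply (step_val (L k) w) (Z w (min (tt (Suc k)) 0) - Z w (min (tt k) 0)) = 0"
      using m0 by simp
  qed
  then show ?thesis unfolding sprd_int_def by simp
qed



lemma step_val_apply_meas:
  fixes l :: "(('h::real_normed_vector \<Rightarrow>\<^sub>L 'h) \<times> 'w set) list"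
  assumes sepH: "\<exists>D::'h set. countable D \<and> closure D = UNIV"
  assumes "\<forall>p\<in>set l. snd p \<in> sets N" and z: "z \<in> borel_measurable N"
  shows "(\<lambda>w. blinfun_apply (step_val l w) (z w)) \<in> borel_measurable N"
  using assms(2)
proof (induction l)
  case Nil
  then show ?case by (simp add: step_val_def)
next
  case (Cons p l)
  have e: "blinfun_apply (step_val (p # l) w) (z w)
     = indicator (snd p) w *\<^sub>R blinfun_apply (fst p) (z w) + blinfun_apply (step_val l w) (z w)" for w
    by (simp add: step_val_def blinfun.add_left blinfun.scaleR_left)
  have m1: "(\<lambda>w. blinfun_apply (fst p) (z w)) \<in> borel_measurable N"
    by (rule measurable_compose[OF z borel_measurable_continuous_onI]) (intro continuous_intros)
  have m2: "(\<lambda>w. indicator (snd p) w :: real) \<in> borel_measurable N"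
    using Cons.prems by (intro borel_measurable_indicator) auto
  show ?case unfolding e
    using Cons m1 m2 by (intro meas_add_sep[OF sepH] meas_scaleR_sep[OF sepH]) auto
qed

locale sp =
  fixes M :: "'w measure" and F :: "real \<Rightarrow> 'w measure" and T :: real
    and Z :: "'w \<Rightarrow> real \<Rightarrow> 'h::{real_inner, complete_space}"
  assumes prob: "prob_space M"
    and filt: "filtration (space M) F"
    and subF: "\<And>t. sets (F t) \<subseteq> sets M"
    and sep: "\<exists>D::'h set. countable D \<and> closure D = UNIV"
    and Tpos: "T > 0"
    and Zm: "\<And>r. 0 \<le> r \<Longrightarrow> r \<le> T \<Longrightarrow> (\<lambda>w. Z w r) \<in> borel_measurable (F r)"
    and Zr: "\<And>w t. w \<in> space M \<Longrightarrow> 0 \<le> t \<Longrightarrow> t < T \<Longrightarrow> (Z w \<longlongrightarrow> Z w t) (at_right t)"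
begin

lemma space_F: "space (F t) = space M"
  using filtration.space_F[OF filt] .

lemma sets_mono: "s \<le> t \<Longrightarrow> A \<in> sets (F s) \<Longrightarrow> A \<in> sets (F t)"
  using filtration.sets_F_mono[OF filt, of s t] by auto

lemma meas_mono: "s \<le> t \<Longrightarrow> f \<in> borel_measurable (F s) \<Longrightarrow> f \<in> borel_measurable (F t)"
  by (rule measurable_from_subalg[of "F t" "F s"])
     (auto simp: subalgebra_def space_F filtration.sets_F_mono[OF filt])

lemma meas_M: "f \<in> borel_measurable (F t) \<Longrightarrow> f \<in> borel_measurable M"
  by (rule measurable_from_subalg[of M "F t"]) (auto simp: subalgebra_def space_F subF)

lemma sprd_op_unfold:
  "sprd_op M F T (G0,n,tt,L) \<longleftrightarrow>
      G0 \<in> borel_measurable (F 0) \<and>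
      2 \<le> n \<and> tt 0 = 0 \<and> tt (n - 1) = T \<and>
      (\<forall>i. Suc i < n \<longrightarrow> tt i < tt (Suc i)) \<and>
      (\<forall>i. Suc i < n \<longrightarrow> (\<forall>p\<in>set (L i). snd p \<in> sets (F (tt i)))) \<and>
      (\<forall>w\<in>space M. norm (G0 w) \<le> 1) \<and>
      (\<forall>i. Suc i < n \<longrightarrow> (\<forall>w\<in>space M. norm (step_val (L i) w) \<le> 1))"
  by (simp add: sprd_op_def)

lemma tt_range:
  assumes "sprd_op M F T (G0,n,tt,L)" "i < n"
  shows "0 \<le> tt i" "tt i \<le> T"
proof -
  have mono: "\<forall>i. Suc i < n \<longrightarrow> tt i < tt (Suc i)" and e: "tt 0 = 0" "tt (n - 1) = T"
    using assms(1) by (auto simp: sprd_op_unfold)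
  show "0 \<le> tt i" using tt_le[OF mono, of 0 i] assms(2) e by auto
  show "tt i \<le> T" using tt_le[OF mono, of i "n - 1"] assms(2) e by auto
qed

lemma I_meas:
  assumes D: "sprd_op M F T (G0,n,tt,L)" and t: "0 \<le> t" "t \<le> T"
  shows "(\<lambda>w. sprd_int (G0,n,tt,L) Z w t) \<in> borel_measurable (F t)"
proof -
  have G0: "G0 \<in> borel_measurable (F 0)" and mono: "\<forall>i. Suc i < n \<longrightarrow> tt i < tt (Suc i)"
    and Ls: "\<And>i. Suc i < n \<Longrightarrow> \<forall>p\<in>set (L i). snd p \<in> sets (F (tt i))"
    using D by (auto simp: sprd_op_unfold)
  have m0: "(\<lambda>w. blinfun_apply (G0 w) (Z w 0)) \<in> borel_measurable (F t)"
    by (rule meas_blinfun_sep[OF sep]) (use meas_mono[OF t(1) G0] meas_mono[OF t(1) Zm[of 0]] Tpos in auto)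
  have mi: "(\<lambda>w. blinfun_apply (step_val (L i) w) (Z w (min (tt (Suc i)) t) - Z w (min (tt i) t)))
      \<in> borel_measurable (F t)" if i: "i \<in> {..<n - 1}" for i
  proof (cases "tt i < t")
    case True
    have i': "Suc i < n" "i < n" using i by auto
    have r1: "0 \<le> tt i" "tt i \<le> T" "0 \<le> tt (Suc i)" "tt (Suc i) \<le> T"
      using tt_range[OF D i'(2)] tt_range[OF D i'(1)] by auto
    have z1: "(\<lambda>w. Z w (min (tt (Suc i)) t)) \<in> borel_measurable (F t)"
      by (rule meas_mono[OF _ Zm]) (use r1 t in auto)
    have z2: "(\<lambda>w. Z w (min (tt i) t)) \<in> borel_measurable (F t)"
      by (rule meas_mono[OF _ Zm]) (use r1 t in auto)
    show ?thesis
    proof (rule step_val_apply_meas[OF sep])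
      show "\<forall>p\<in>set (L i). snd p \<in> sets (F t)"
        using Ls[OF i'(1)] sets_mono[of "tt i" t] True by auto
    qed (use z1 z2 meas_diff_sep[OF sep] in auto)
  next
    case False
    have i': "Suc i < n" using i by auto
    then have "tt i < tt (Suc i)" using mono by auto
    with False have "min (tt (Suc i)) t = t" "min (tt i) t = t" by auto
    then show ?thesis by simp
  qed
  have e: "(\<lambda>w. sprd_int (G0,n,tt,L) Z w t) = (\<lambda>w. blinfun_apply (G0 w) (Z w 0) +
      (\<Sum>i<n - 1. blinfun_apply (step_val (L i) w) (Z w (min (tt (Suc i)) t) - Z w (min (tt i) t))))"
    by (simp add: sprd_int_def)
  show ?thesis unfolding e
    by (intro meas_add_sep[OF sep] m0 meas_sum_sep[OF sep] mi) auto
qed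

end


lemma grid_enum:
  fixes S :: "real set"
  assumes fin: "finite S"
  shows "\<And>j k. j < k \<Longrightarrow> k < card S \<Longrightarrow> sorted_list_of_set S ! j < sorted_list_of_set S ! k"
    and "S = (\<lambda>j. sorted_list_of_set S ! j) ` {..<card S}"
proof -
  have st: "sorted_wrt (<) (sorted_list_of_set S)" by (rule strict_sorted_list_of_set)
  have len: "length (sorted_list_of_set S) = card S" by simp
  show "\<And>j k. j < k \<Longrightarrow> k < card S \<Longrightarrow> sorted_list_of_set S ! j < sorted_list_of_set S ! k"
    using sorted_wrt_nth_less[OF st] len by metis
  have "S = set (sorted_list_of_set S)" using fin by simp
  also have "\<dots> = (\<lambda>j. sorted_list_of_set S ! j) ` {..<card S}"
    by (simp add: set_conv_nth len image_def) blast
  finally show "S = (\<lambda>j. sorted_list_of_set S ! j) ` {..<card S}" .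
qed

lemma step_val_restrict:
  "step_val (map (\<lambda>p. (fst p, snd p \<inter> B)) l) w = (indicator B w :: real) *\<^sub>R step_val l w"
  by (induction l) (simp_all add: step_val_def indicator_inter_arith scaleR_add_right)

context sp
begin

lemma I_rc:
  assumes D: "sprd_op M F T (G0,n,tt,L)" and w: "w \<in> space M" and t: "0 \<le> t" "t < T"
  shows "((\<lambda>r. sprd_int (G0,n,tt,L) Z w r) \<longlongrightarrow> sprd_int (G0,n,tt,L) Z w t) (at_right t)"
proof -
  have mono: "\<forall>i. Suc i < n \<longrightarrow> tt i < tt (Suc i)" and e: "tt 0 = 0" "tt (n - 1) = T"
    using D by (auto simp: sprd_op_unfold)
  obtain i where i: "Suc i < n" "tt i \<le> t" "t < tt (Suc i)"
    using interval_find[OF mono, of t] e t by auto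
  have ev: "\<forall>\<^sub>F r in at_right t. sprd_int (G0,n,tt,L) Z w t + blinfun_apply (step_val (L i) w) (Z w r - Z w t)
      = sprd_int (G0,n,tt,L) Z w r"
    unfolding eventually_at_right_field
  proof (intro exI[of _ "tt (Suc i)"] conjI allI impI)
    fix r assume "t < r" "r < tt (Suc i)"
    then show "sprd_int (G0,n,tt,L) Z w t + blinfun_apply (step_val (L i) w) (Z w r - Z w t)
      = sprd_int (G0,n,tt,L) Z w r"
      using sprd_int_incr[OF mono i(1), of t r G0 L Z w] i by (simp add: algebra_simps)
  qed (use i in auto)
  have "((\<lambda>r. sprd_int (G0,n,tt,L) Z w t + blinfun_apply (step_val (L i) w) (Z w r - Z w t))
      \<longlongrightarrow> sprd_int (G0,n,tt,L) Z w t + blinfun_apply (step_val (L i) w) (Z w t - Z w t)) (at_right t)"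
    by (intro tendsto_intros Zr[OF w t])
  then have "((\<lambda>r. sprd_int (G0,n,tt,L) Z w t + blinfun_apply (step_val (L i) w) (Z w r - Z w t))
      \<longlongrightarrow> sprd_int (G0,n,tt,L) Z w t) (at_right t)" by simp
  then show ?thesis by (rule Lim_transform_eventually[OF _ ev])
qed

lemma norm_le_set:
  fixes f :: "'w \<Rightarrow> 'h"
  assumes "f \<in> borel_measurable N"
  shows "{w \<in> space N. norm (f w) \<le> c} \<in> sets N"
proof -
  have g: "(\<lambda>w. norm (f w)) \<in> borel_measurable N"
    by (rule measurable_compose[OF assms borel_measurable_continuous_onI]) (intro continuous_intros)
  have "(\<lambda>w. norm (f w)) -` {..c} \<inter> space N \<in> sets N"
    by (rule measurable_sets[OF g]) simp
  moreover have "(\<lambda>w. norm (f w)) -` {..c} \<inter> space N = {w \<in> space N. norm (f w) \<le> c}" by auto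
  ultimately show ?thesis by simp
qed

end


context sp
begin

lemma refine:
  assumes D: "sprd_op M F T (G0,n,tt,L)" and S: "finite S" "S \<subseteq> {0..T}" "T \<in> S" "\<forall>i<n. tt i \<in> S"
  shows "\<exists>D'. sprd_op M F T D' \<and> (\<forall>w\<in>space M. (\<exists>x\<in>S. \<epsilon> < norm (sprd_int (G0,n,tt,L) Z w x))
            \<longrightarrow> \<epsilon> < norm (sprd_int D' Z w T))"
proof -
  have G0: "G0 \<in> borel_measurable (F 0)" and n2: "2 \<le> n" and mono: "\<forall>i. Suc i < n \<longrightarrow> tt i < tt (Suc i)"
    and e: "tt 0 = 0" "tt (n - 1) = T"
    and Ls: "\<And>i. Suc i < n \<Longrightarrow> \<forall>p\<in>set (L i). snd p \<in> sets (F (tt i))"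
    and nG: "\<forall>w\<in>space M. norm (G0 w) \<le> 1"
    and nL: "\<And>i. Suc i < n \<Longrightarrow> \<forall>w\<in>space M. norm (step_val (L i) w) \<le> 1"
    using D by (auto simp: sprd_op_unfold)
  define I where "I w x = sprd_int (G0,n,tt,L) Z w x" for w x
  define m where "m = card S"
  define s where "s j = sorted_list_of_set S ! j" for j
  have smono: "s j < s k" if "j < k" "k < m" for j k
    using grid_enum(1)[OF S(1) that[unfolded m_def]] by (simp add: s_def)
  have smono': "s j \<le> s k" if "j \<le> k" "k < m" for j k
    using smono[of j k] that by (cases "j = k") auto
  have Seq: "S = s ` {..<m}" using grid_enum(2)[OF S(1)] by (simp add: s_def m_def)
  have sS: "s j \<in> S" if "j < m" for j using Seq that by auto
  have s_rng: "0 \<le> s j" "s j \<le> T" if "j < m" for j using sS[OF that] S(2) by auto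
  have zS: "0 \<in> S" using S(4) e n2 by (metis gr_zeroI not_numeral_le_zero)
  have m2: "2 \<le> m"
  proof -
    have "{0, T} \<subseteq> S" using zS S(3) by auto
    then have "card {0, T} \<le> m" unfolding m_def using S(1) by (rule card_mono[rotated])
    then show ?thesis using Tpos by simp
  qed
  have s0: "s 0 = 0"
  proof -
    obtain k where k: "k < m" "s k = 0" using zS Seq by auto
    have "s 0 \<le> s k" using smono'[of 0 k] k by auto
    then show ?thesis using s_rng[of 0] m2 k by auto
  qed
  have sT: "s (m - 1) = T"
  proof -
    obtain k where k: "k < m" "s k = T" using S(3) Seq by auto
    have "s k \<le> s (m - 1)" using smono'[of k "m - 1"] k by auto
    then show ?thesis using s_rng[of "m - 1"] m2 k by auto
  qed
  have ix_ex: "\<exists>i. Suc i < n \<and> tt i \<le> s j \<and> s (Suc j) \<le> tt (Suc i)" if j: "Suc j < m" for j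
  proof -
    have "s j < T" using smono[of j "m - 1"] sT j by auto
    then obtain i where i: "Suc i < n" "tt i \<le> s j" "s j < tt (Suc i)"
      using interval_find[OF mono, of "s j"] e s_rng[of j] j by auto
    have "tt (Suc i) \<in> S" using S(4) i by auto
    then obtain k where k: "k < m" "s k = tt (Suc i)" using Seq by auto
    have "j < k" using i k smono'[of k j] j by (metis Suc_lessD not_le_imp_less not_less)
    then have "s (Suc j) \<le> s k" using smono'[of "Suc j" k] k by auto
    then show ?thesis using i k by auto
  qed
  define ix where "ix j = (SOME i. Suc i < n \<and> tt i \<le> s j \<and> s (Suc j) \<le> tt (Suc i))" for j
  have ix: "Suc (ix j) < n" "tt (ix j) \<le> s j" "s (Suc j) \<le> tt (Suc (ix j))" if "Suc j < m" for j
    using someI_ex[OF ix_ex[OF that]] unfolding ix_def by auto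
  define B where "B j = {w \<in> space M. \<forall>k\<in>{..j}. norm (I w (s k)) \<le> \<epsilon>}" for j
  define L' where "L' j = map (\<lambda>p. (fst p, snd p \<inter> B j)) (L (ix j))" for j
  define D' where "D' = (G0, m, s, L')"
  have Im: "(\<lambda>w. I w (s k)) \<in> borel_measurable (F (s k))" if "k < m" for k
    unfolding I_def by (rule I_meas[OF D s_rng[OF that]])
  have Bm: "B j \<in> sets (F (s j))" if "j < m" for j
  proof -
    have "{w \<in> space (F (s j)). \<forall>k\<in>{..j}. norm (I w (s k)) \<le> \<epsilon>} \<in> sets (F (s j))"
    proof (rule sets.sets_Collect_finite_All)
      fix k assume k: "k \<in> {..j}"
      then have "s k \<le> s j" using smono' that by auto
      then have "(\<lambda>w. I w (s k)) \<in> borel_measurable (F (s j))"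
        by (rule meas_mono[OF _ Im[of k]]) (use k that in auto)
      then show "{w \<in> space (F (s j)). norm (I w (s k)) \<le> \<epsilon>} \<in> sets (F (s j))"
        by (rule norm_le_set)
    qed simp
    then show ?thesis by (simp add: B_def space_F)
  qed
  have op': "sprd_op M F T D'"
    unfolding D'_def sprd_op_unfold
  proof (intro conjI allI impI ballI)
    show "G0 \<in> borel_measurable (F 0)" by (rule G0)
    show "2 \<le> m" by (rule m2)
    show "s 0 = 0" by (rule s0)
    show "s (m - 1) = T" by (rule sT)
    show "s i < s (Suc i)" if "Suc i < m" for i using smono that by auto
    show "snd p \<in> sets (F (s i))" if i: "Suc i < m" and p: "p \<in> set (L' i)" for i p
    proof -
      obtain q where q: "q \<in> set (L (ix i))" "p = (fst q, snd q \<inter> B i)" using p by (auto simp: L'_def)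
      have "snd q \<in> sets (F (tt (ix i)))" using Ls[OF ix(1)[OF i]] q by auto
      then have "snd q \<in> sets (F (s i))" using sets_mono ix(2)[OF i] by auto
      moreover have "B i \<in> sets (F (s i))" using Bm i by auto
      ultimately show ?thesis using q by auto
    qed
    show "norm (G0 w) \<le> 1" if "w \<in> space M" for w using nG that by auto
    show "norm (step_val (L' i) w) \<le> 1" if i: "Suc i < m" and w: "w \<in> space M" for i w
    proof -
      have "norm (step_val (L' i) w) = indicator (B i) w * norm (step_val (L (ix i)) w)"
        by (simp add: L'_def step_val_restrict)
      also have "\<dots> \<le> 1 * 1"
        using nL[OF ix(1)[OF i]] w by (intro mult_mono) (auto simp: indicator_def)
      finally show ?thesis by simp
    qed
  qed
  define tm where "tm j w = blinfun_apply (step_val (L (ix j)) w) (Z w (s (Suc j)) - Z w (s j))" for j w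
  have Igrid: "I w (s J) = blinfun_apply (G0 w) (Z w 0) + (\<Sum>j<J. tm j w)" if "J < m" for J w
    using that
  proof (induction J)
    case 0
    then show ?case using sprd_int_zero[OF mono e(1)] by (simp add: I_def s0)
  next
    case (Suc J)
    have "I w (s (Suc J)) - I w (s J) = tm J w"
      unfolding I_def tm_def
      by (rule sprd_int_incr[OF mono ix(1)[OF Suc.prems] ix(2)[OF Suc.prems] _ ix(3)[OF Suc.prems]])
         (use smono[of J "Suc J"] Suc.prems in auto)
    then show ?case using Suc by (simp add: algebra_simps)
  qed
  have I': "sprd_int D' Z w T = blinfun_apply (G0 w) (Z w 0) + (\<Sum>j<m - 1. indicator (B j) w *\<^sub>R tm j w)" for w
  proof -
    have "min (s (Suc j)) T = s (Suc j)" "min (s j) T = s j" if "j < m - 1" for j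
      using s_rng[of j] s_rng[of "Suc j"] that by auto
    then show ?thesis unfolding D'_def sprd_int_def tm_def
      by (auto simp: L'_def step_val_restrict blinfun.scaleR_left intro!: sum.cong)
  qed
  show ?thesis
  proof (intro exI[of _ D'] conjI op' ballI impI)
    fix w assume w: "w \<in> space M" and ex: "\<exists>x\<in>S. \<epsilon> < norm (sprd_int (G0, n, tt, L) Z w x)"
    then obtain k0 where k0: "k0 < m" "\<epsilon> < norm (I w (s k0))" using Seq by (auto simp: I_def)
    define J where "J = (LEAST k. \<epsilon> < norm (I w (s k)))"
    have J: "\<epsilon> < norm (I w (s J))" unfolding J_def by (rule LeastI[of _ k0]) (rule k0(2))
    have Jle: "J \<le> k0" unfolding J_def by (rule Least_le) (rule k0(2))
    have Bi: "(w \<in> B j) = (j < J)" for j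
    proof
      assume "w \<in> B j"
      then have "\<forall>k\<le>j. norm (I w (s k)) \<le> \<epsilon>" by (auto simp: B_def)
      then show "j < J" using J by (metis not_le not_less)
    next
      assume "j < J"
      then have "\<forall>k\<le>j. norm (I w (s k)) \<le> \<epsilon>"
        using not_less_Least[of _ "\<lambda>k. \<epsilon> < norm (I w (s k))"] unfolding J_def[symmetric]
        by (meson le_less_trans not_le)
      then show "w \<in> B j" using w by (auto simp: B_def)
    qed
    have "(\<Sum>j<m - 1. indicator (B j) w *\<^sub>R tm j w) = (\<Sum>j<m - 1. if j \<in> {..<J} then tm j w else 0)"
      by (rule sum.cong) (auto simp: Bi indicator_def)
    also have "\<dots> = (\<Sum>j\<in>{..<m - 1} \<inter> {..<J}. tm j w)"
      by (rule sum.inter_restrict[symmetric]) simp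
    also have "{..<m - 1} \<inter> {..<J} = {..<J}" using Jle k0 by auto
    finally have "sprd_int D' Z w T = I w (s J)"
      using I' Igrid[of J w] Jle k0 by simp
    then show "\<epsilon> < norm (sprd_int D' Z w T)" using J by simp
  qed
qed

end


sublocale sp \<subseteq> P: prob_space M by (rule prob)

context sp
begin

definition fD where "fD D w = min (norm (sprd_int D Z w T)) 1"
definition gD where "gD D w = (SUP t\<in>{0..T}. min (norm (sprd_int D Z w t)) 1)"
definition rho where "rho = (SUP D\<in>{D. sprd_op M F T D}. integral\<^sup>L M (fD D))"
definition dd where "dd = (SUP D\<in>{D. sprd_op M F T D}. integral\<^sup>L M (gD D))"

lemma int01:
  fixes h :: "'w \<Rightarrow> real"
  assumes "\<And>w. w \<in> space M \<Longrightarrow> 0 \<le> h w \<and> h w \<le> 1"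
  shows "0 \<le> integral\<^sup>L M h" "integral\<^sup>L M h \<le> 1"
proof -
  show "0 \<le> integral\<^sup>L M h" using assms by (intro Bochner_Integration.integral_nonneg) auto
  show "integral\<^sup>L M h \<le> 1"
  proof (cases "integrable M h")
    case True
    have "integral\<^sup>L M h \<le> integral\<^sup>L M (\<lambda>w. 1::real)"
      using assms by (intro integral_mono True) auto
    also have "\<dots> = 1" by (simp add: P.prob_space)
    finally show ?thesis .
  qed (simp add: not_integrable_integral_eq)
qed

lemma ex_sprd: "\<exists>D::('w,'h) sprd_data. sprd_op M F T D"
proof -
  have "sprd_op M F T ((\<lambda>w. 0 :: 'h \<Rightarrow>\<^sub>L 'h), 2, (\<lambda>i. if i = 0 then 0 else T), (\<lambda>i. []))"
    unfolding sprd_op_unfold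
  proof (intro conjI allI impI ballI)
    fix i assume "Suc i < (2::nat)"
    then have "i = 0" by simp
    then show "(if i = 0 then 0 else T) < (if Suc i = 0 then 0 else T)" using Tpos by simp
  qed (auto simp: step_val_def)
  then show ?thesis by blast
qed

lemma ne: "{D::('w,'h) sprd_data. sprd_op M F T D} \<noteq> {}" using ex_sprd by auto

lemma fD01: "0 \<le> fD D w" "fD D w \<le> 1" by (auto simp: fD_def)

lemma gD01: "0 \<le> gD D w" "gD D w \<le> 1"
proof -
  have b: "bdd_above ((\<lambda>t. min (norm (sprd_int D Z w t)) 1) ` {0..T})"
    by (rule bdd_aboveI[of _ 1]) auto
  have "min (norm (sprd_int D Z w 0)) 1 \<le> gD D w"
    unfolding gD_def by (rule cSUP_upper[OF _ b]) (use Tpos in auto)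
  then show "0 \<le> gD D w" by (simp add: order_trans[rotated])
  show "gD D w \<le> 1" unfolding gD_def by (rule cSUP_least) (use Tpos in auto)
qed

lemma bddf: "bdd_above ((\<lambda>D. integral\<^sup>L M (fD D)) ` A)"
  by (rule bdd_aboveI[of _ 1]) (auto intro!: int01 fD01)

lemma bddg: "bdd_above ((\<lambda>D. integral\<^sup>L M (gD D)) ` A)"
  by (rule bdd_aboveI[of _ 1]) (auto intro!: int01 gD01)

lemma rho_nonneg: "0 \<le> rho"
proof -
  obtain D :: "('w,'h) sprd_data" where D: "sprd_op M F T D" using ex_sprd by blast
  have "0 \<le> integral\<^sup>L M (fD D)" by (intro int01 fD01) (auto intro: fD01)
  also have "\<dots> \<le> rho" unfolding rho_def by (rule cSUP_upper[OF _ bddf]) (use D in auto)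
  finally show ?thesis .
qed

lemma Im_M:
  fixes D :: "('w,'h) sprd_data"
  assumes "sprd_op M F T D" "0 \<le> t" "t \<le> T"
  shows "(\<lambda>w. sprd_int D Z w t) \<in> borel_measurable M"
proof -
  obtain G0 n tt L where "D = (G0, n, tt, L)" by (cases D) auto
  then show ?thesis using I_meas[of G0 n tt L t] assms meas_M by auto
qed

lemma minnorm_meas:
  fixes f :: "'w \<Rightarrow> 'h"
  assumes "f \<in> borel_measurable M"
  shows "(\<lambda>w. min (norm (f w)) 1) \<in> borel_measurable M"
  by (rule measurable_compose[OF assms borel_measurable_continuous_onI]) (intro continuous_intros)

lemma fD_int: "sprd_op M F T D \<Longrightarrow> integrable M (fD D)"
  unfolding fD_def
  by (rule P.integrable_const_bound[where B=1]) (auto intro!: minnorm_meas Im_M less_imp_le[OF Tpos])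

end


context sp
begin

definition Q where "Q = insert T (\<rat> \<inter> {0..T})"

lemma Q_sub: "Q \<subseteq> {0..T}" using Tpos by (auto simp: Q_def)

lemma Q_countable: "countable Q" by (simp add: Q_def countable_rat)

lemma DL:
  fixes D :: "('w,'h) sprd_data"
  assumes D: "sprd_op M F T D" and w: "w \<in> space M" and t: "0 \<le> t" "t \<le> T" and d: "\<delta> > 0"
  shows "\<exists>r\<in>Q. norm (sprd_int D Z w r - sprd_int D Z w t) < \<delta>"
proof (cases "t = T")
  case True
  then show ?thesis using d by (intro bexI[of _ T]) (auto simp: Q_def)
next
  case False
  then have tT: "t < T" using t by auto
  obtain G0 n tt L where De: "D = (G0, n, tt, L)" by (cases D) auto
  have "((\<lambda>r. sprd_int D Z w r) \<longlongrightarrow> sprd_int D Z w t) (at_right t)"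
    using I_rc[of G0 n tt L w t] D w t tT De by auto
  then have "\<forall>\<^sub>F r in at_right t. dist (sprd_int D Z w r) (sprd_int D Z w t) < \<delta>"
    using d by (rule tendstoD)
  then obtain b where b: "b > t" "\<And>y. y > t \<Longrightarrow> y < b \<Longrightarrow> dist (sprd_int D Z w y) (sprd_int D Z w t) < \<delta>"
    unfolding eventually_at_right_field by blast
  obtain r where r: "r \<in> \<rat>" "t < r" "r < min b T" using Rats_dense_in_real[of t "min b T"] b tT by auto
  have "r \<in> Q" using r t by (auto simp: Q_def)
  moreover have "norm (sprd_int D Z w r - sprd_int D Z w t) < \<delta>" using b(2)[of r] r by (auto simp: dist_norm)
  ultimately show ?thesis by blast
qed

lemma gD_Q:
  fixes D :: "('w,'h) sprd_data"
  assumes D: "sprd_op M F T D" and w: "w \<in> space M"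
  shows "gD D w = (SUP r\<in>Q. min (norm (sprd_int D Z w r)) 1)"
proof -
  define \<phi> where "\<phi> r = min (norm (sprd_int D Z w r)) 1" for r
  have Qne: "Q \<noteq> {}" by (auto simp: Q_def)
  have bQ: "bdd_above (\<phi> ` Q)" by (rule bdd_aboveI[of _ 1]) (auto simp: \<phi>_def)
  have bT: "bdd_above (\<phi> ` {0..T})" by (rule bdd_aboveI[of _ 1]) (auto simp: \<phi>_def)
  have "(SUP t\<in>{0..T}. \<phi> t) \<le> (SUP r\<in>Q. \<phi> r)"
  proof (rule cSUP_least)
    show "{0..T} \<noteq> {}" using Tpos by auto
    fix t assume t: "t \<in> {0..T}"
    show "\<phi> t \<le> (SUP r\<in>Q. \<phi> r)"
    proof (rule field_le_epsilon)
      fix e :: real assume e: "0 < e"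
      obtain r where r: "r \<in> Q" "norm (sprd_int D Z w r - sprd_int D Z w t) < e"
        using DL[OF D w _ _ e, of t] t by auto
      have "norm (sprd_int D Z w t) \<le> norm (sprd_int D Z w r) + norm (sprd_int D Z w r - sprd_int D Z w t)"
        by (metis add.commute norm_triangle_ineq4 norm_minus_commute diff_add_cancel norm_triangle_ineq)
      then have "\<phi> t \<le> \<phi> r + e" using r e unfolding \<phi>_def min_def by auto
      also have "\<phi> r \<le> (SUP r\<in>Q. \<phi> r)" by (rule cSUP_upper[OF r(1) bQ])
      finally show "\<phi> t \<le> (SUP r\<in>Q. \<phi> r) + e" by simp
    qed
  qed
  moreover have "(SUP r\<in>Q. \<phi> r) \<le> (SUP t\<in>{0..T}. \<phi> t)"
    by (rule cSUP_subset_mono[OF Qne bT Q_sub]) simp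
  ultimately show ?thesis unfolding gD_def \<phi>_def by (rule antisym)
qed

lemma gD_meas:
  fixes D :: "('w,'h) sprd_data"
  assumes D: "sprd_op M F T D"
  shows "gD D \<in> borel_measurable M"
proof -
  have "(\<lambda>w. SUP r\<in>Q. min (norm (sprd_int D Z w r)) 1) \<in> borel_measurable M"
  proof (rule borel_measurable_cSUP)
    show "countable Q" by (rule Q_countable)
    fix r assume "r \<in> Q"
    then show "(\<lambda>w. min (norm (sprd_int D Z w r)) 1) \<in> borel_measurable M"
      using Q_sub by (intro minnorm_meas Im_M[OF D]) auto
  next
    fix w show "bdd_above ((\<lambda>r. min (norm (sprd_int D Z w r)) 1) ` Q)"
      by (rule bdd_aboveI[of _ 1]) auto
  qed
  then show ?thesis
    by (rule measurable_cong[THEN iffD1, rotated]) (simp add: gD_Q[OF D])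
qed

lemma gD_norm: "norm (gD D w) \<le> 1"
  using gD01[of D w] by simp

lemma gD_int: "sprd_op M F T D \<Longrightarrow> integrable M (gD D)"
  by (rule P.integrable_const_bound[where B=1]) (auto intro!: gD_meas AE_I2 gD_norm simp del: real_norm_def)

lemma rho_le_dd: "rho \<le> dd"
  unfolding rho_def dd_def
proof (rule cSUP_mono[OF ne bddg])
  fix D :: "('w,'h) sprd_data" assume D: "D \<in> {D. sprd_op M F T D}"
  have "integral\<^sup>L M (fD D) \<le> integral\<^sup>L M (gD D)"
  proof (rule integral_mono)
    show "integrable M (fD D)" using D fD_int by auto
    show "integrable M (gD D)" using D gD_int by auto
    fix w assume "w \<in> space M"
    show "fD D w \<le> gD D w" unfolding fD_def gD_def
      by (rule cSUP_upper) (auto intro!: bdd_aboveI[of _ 1] simp: less_imp_le[OF Tpos])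
  qed
  then show "\<exists>m\<in>{D. sprd_op M F T D}. integral\<^sup>L M (fD D) \<le> integral\<^sup>L M (gD m)" using D by blast
qed

end


context sp
begin

lemma gt_set:
  fixes g :: "'w \<Rightarrow> real"
  assumes [measurable]: "g \<in> borel_measurable M"
  shows "{w \<in> space M. c < g w} \<in> sets M"
  by measurable

lemma norm_meas:
  fixes f :: "'w \<Rightarrow> 'h"
  assumes "f \<in> borel_measurable M"
  shows "(\<lambda>w. norm (f w)) \<in> borel_measurable M"
  by (rule measurable_compose[OF assms borel_measurable_continuous_onI]) (intro continuous_intros)

lemma gD_bound:
  fixes D :: "('w,'h) sprd_data"
  assumes D: "sprd_op M F T D" and eps: "0 < \<epsilon>" "\<epsilon> \<le> 1"
  shows "integral\<^sup>L M (gD D) \<le> \<epsilon> + rho / \<epsilon>"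
proof -
  obtain G0 n tt L where De: "D = (G0, n, tt, L)" by (cases D) auto
  have D0: "sprd_op M F T (G0, n, tt, L)" using D De by simp
  define I where "I w x = sprd_int D Z w x" for w x
  define R where "R = \<rat> \<inter> {0..T}"
  have Rne: "R \<noteq> {}" using Tpos by (auto simp: R_def intro!: exI[of _ 0])
  have Rc: "countable R" by (simp add: R_def countable_rat)
  define e where "e = from_nat_into R"
  have eR: "range e = R" using Rne Rc by (simp add: e_def)
  define S where "S q = tt ` {..<n} \<union> {T} \<union> e ` {..q}" for q
  have S_fin: "finite (S q)" for q by (simp add: S_def)
  have S_sub: "S q \<subseteq> {0..T}" for q
  proof -
    have "tt ` {..<n} \<subseteq> {0..T}" using tt_range[OF D0] by auto
    moreover have "e ` {..q} \<subseteq> {0..T}" using eR by (auto simp: R_def)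
    ultimately show ?thesis using Tpos by (auto simp: S_def)
  qed
  have "\<exists>D'. sprd_op M F T D' \<and> (\<forall>w\<in>space M. (\<exists>x\<in>S q. \<epsilon> < norm (I w x))
            \<longrightarrow> \<epsilon> < norm (sprd_int D' Z w T))" for q
    unfolding I_def De by (rule refine[OF D0 S_fin S_sub]) (auto simp: S_def)
  then obtain DD where DD: "\<And>q. sprd_op M F T (DD q)"
    "\<And>q w. w \<in> space M \<Longrightarrow> (\<exists>x\<in>S q. \<epsilon> < norm (I w x)) \<Longrightarrow> \<epsilon> < norm (sprd_int (DD q) Z w T)"
    by metis
  define E where "E q = {w \<in> space M. \<exists>x\<in>S q. \<epsilon> < norm (I w x)}" for q
  have Em: "E q \<in> sets M" for q
    unfolding E_def
  proof (rule sets.sets_Collect_finite_Ex[OF _ S_fin])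
    fix x assume "x \<in> S q"
    then have x: "0 \<le> x" "x \<le> T" using S_sub[of q] by auto
    have "(\<lambda>w. norm (I w x)) \<in> borel_measurable M"
      unfolding I_def by (intro norm_meas Im_M[OF D x])
    then show "{w \<in> space M. \<epsilon> < norm (I w x)} \<in> sets M" by (rule gt_set)
  qed
  have Einc: "incseq E"
    by (rule incseq_SucI) (auto simp: E_def S_def)
  define A where "A q = {w \<in> space M. \<epsilon> < norm (sprd_int (DD q) Z w T)}" for q
  have Am: "A q \<in> sets M" for q
    unfolding A_def by (intro gt_set norm_meas Im_M[OF DD(1)]) (auto simp: less_imp_le[OF Tpos])
  have EA: "E q \<subseteq> A q" for q using DD(2) by (auto simp: E_def A_def)
  have mE: "measure M (E q) \<le> rho / \<epsilon>" for q
  proof -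
    have "\<epsilon> * measure M (A q) = integral\<^sup>L M (\<lambda>w. \<epsilon> * indicator (A q) w)"
      using Am[of q] sets.sets_into_space by (simp add: Int_absorb2)
    also have "\<dots> \<le> integral\<^sup>L M (fD (DD q))"
    proof (rule integral_mono)
      show "integrable M (\<lambda>w. \<epsilon> * indicator (A q) w)"
        using Am by (intro integrable_mult_right integrable_real_indicator) (auto simp: less_top[symmetric] P.emeasure_finite)
      show "integrable M (fD (DD q))" by (rule fD_int[OF DD(1)])
      fix w assume "w \<in> space M"
      show "\<epsilon> * indicator (A q) w \<le> fD (DD q) w"
        using eps fD01[of "DD q" w] by (auto simp: indicator_def A_def fD_def)
    qed
    also have "\<dots> \<le> rho" unfolding rho_def by (rule cSUP_upper[OF _ bddf]) (use DD in auto)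
    finally have "measure M (A q) \<le> rho / \<epsilon>" using eps by (simp add: pos_le_divide_eq mult.commute)
    moreover have "measure M (E q) \<le> measure M (A q)" by (rule P.finite_measure_mono[OF EA Am])
    ultimately show ?thesis by simp
  qed
  define U where "U = (\<Union>q. E q)"
  have Um: "U \<in> sets M" unfolding U_def using Em by auto
  have mU: "measure M U \<le> rho / \<epsilon>"
  proof -
    have "(\<lambda>q. measure M (E q)) \<longlonglongrightarrow> measure M U"
      unfolding U_def by (rule P.finite_Lim_measure_incseq) (use Em Einc in auto)
    then show ?thesis by (rule LIMSEQ_le_const2) (use mE in auto)
  qed
  have pw: "gD D w \<le> \<epsilon> + indicator U w" if w: "w \<in> space M" for w
  proof (cases "w \<in> U")
    case True
    then show ?thesis using gD01[of D w] eps by simp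
  next
    case False
    have "norm (I w t) \<le> \<epsilon>" if t: "t \<in> {0..T}" for t
    proof (rule ccontr)
      assume "\<not> norm (I w t) \<le> \<epsilon>"
      then have lt: "\<epsilon> < norm (I w t)" by simp
      obtain r where r: "r \<in> Q" "norm (I w r - I w t) < norm (I w t) - \<epsilon>"
        using DL[OF D w, of t "norm (I w t) - \<epsilon>"] t lt unfolding I_def by auto
      have "norm (I w t) \<le> norm (I w r) + norm (I w r - I w t)"
        by (metis add.commute norm_triangle_ineq4 norm_minus_commute diff_add_cancel norm_triangle_ineq)
      then have rgt: "\<epsilon> < norm (I w r)" using r by simp
      have "\<exists>q. r \<in> S q"
      proof (cases "r = T")
        case True then show ?thesis by (auto simp: S_def)
      next
        case False
        then have "r \<in> R" using r(1) by (auto simp: Q_def R_def)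
        then obtain q where "r = e q" using eR by auto
        then show ?thesis by (auto simp: S_def intro!: exI[of _ q])
      qed
      then obtain q where "r \<in> S q" by blast
      then have "w \<in> E q" using rgt w by (auto simp: E_def)
      then show False using False by (auto simp: U_def)
    qed
    then have "gD D w \<le> \<epsilon>" unfolding gD_def I_def
      by (intro cSUP_least) (use Tpos in \<open>auto intro: min.coboundedI1\<close>)
    then show ?thesis using False by simp
  qed
  have "integral\<^sup>L M (gD D) \<le> integral\<^sup>L M (\<lambda>w. \<epsilon> + indicator U w)"
  proof (rule integral_mono)
    show "integrable M (gD D)" by (rule gD_int[OF D])
    show "integrable M (\<lambda>w. \<epsilon> + indicator U w)"
      using Um by (intro Bochner_Integration.integrable_add integrable_real_indicator) (auto simp: less_top[symmetric] P.emeasure_finite)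
    show "\<And>w. w \<in> space M \<Longrightarrow> gD D w \<le> \<epsilon> + indicator U w" by (rule pw)
  qed
  also have "integral\<^sup>L M (\<lambda>w. \<epsilon> + indicator U w) = \<epsilon> + measure M U"
  proof -
    have "integral\<^sup>L M (\<lambda>w. \<epsilon> + indicator U w) = integral\<^sup>L M (\<lambda>w. \<epsilon>) + integral\<^sup>L M (indicator U :: 'w \<Rightarrow> real)"
      using Um by (intro Bochner_Integration.integral_add integrable_real_indicator) (auto simp: less_top[symmetric] P.emeasure_finite)
    then show ?thesis using Um sets.sets_into_space[OF Um] by (simp add: P.prob_space Int_absorb2)
  qed
  finally show ?thesis using mU by simp
qed

lemma dd_bound:
  assumes eps: "0 < \<epsilon>" "\<epsilon> \<le> 1"
  shows "dd \<le> \<epsilon> + rho / \<epsilon>"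
  unfolding dd_def by (rule cSUP_least[OF ne]) (use gD_bound eps in auto)

end


theorem lemma2p4:
  fixes M :: "'w measure" and F :: "real \<Rightarrow> 'w measure" and T :: real
    and H_witness :: "'h::{real_inner, complete_space} itself"
  assumes "prob_space M"
    and "complete_measure M"
    and "filtration (space M) F"
    and "\<And>t. sets (F t) \<subseteq> sets M"
    and "null_sets M \<subseteq> sets (F 0)"
    and "\<exists>D::'h set. countable D \<and> closure D = UNIV"
    and "T > 0"
  shows "\<forall>U. pm_open (adapted_cadlag M F T :: ('w \<Rightarrow> real \<Rightarrow> 'h) set) (rho_em M F T) U
           \<longleftrightarrow> pm_open (adapted_cadlag M F T) (d_em M F T) U"
proof -
  define C where "C = (adapted_cadlag M F T :: ('w \<Rightarrow> real \<Rightarrow> 'h) set)"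
  have Ceq: "adapted_cadlag M F T = C" by (simp add: C_def)
  have key: "rho_em M F T X Y \<le> d_em M F T X Y \<and>
      (\<forall>\<epsilon>. 0 < \<epsilon> \<longrightarrow> \<epsilon> \<le> 1 \<longrightarrow> d_em M F T X Y \<le> \<epsilon> + rho_em M F T X Y / \<epsilon>)"
    if X: "X \<in> C" and Y: "Y \<in> C" for X Y
  proof -
    have Xm: "\<And>t. t \<in> {0..T} \<Longrightarrow> (\<lambda>w. X w t) \<in> borel_measurable (F t)"
      and Xc: "\<And>w. w \<in> space M \<Longrightarrow> cadlag_on T (X w)"
      using X by (auto simp: C_def adapted_cadlag_def)
    have Ym: "\<And>t. t \<in> {0..T} \<Longrightarrow> (\<lambda>w. Y w t) \<in> borel_measurable (F t)"
      and Yc: "\<And>w. w \<in> space M \<Longrightarrow> cadlag_on T (Y w)"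
      using Y by (auto simp: C_def adapted_cadlag_def)
    have spI: "sp M F T (\<lambda>w s. X w s - Y w s)"
    proof (rule sp.intro[OF assms(1) assms(3) assms(4) assms(6) assms(7)])
      fix r :: real assume "0 \<le> r" "r \<le> T"
      then show "(\<lambda>w. X w r - Y w r) \<in> borel_measurable (F r)"
        using Xm[of r] Ym[of r] by (intro meas_diff_sep[OF assms(6)]) auto
    next
      fix w t assume w: "w \<in> space M" and t: "0 \<le> t" "t < T"
      have "(X w \<longlongrightarrow> X w t) (at_right t)" "(Y w \<longlongrightarrow> Y w t) (at_right t)"
        using Xc[OF w] Yc[OF w] t by (auto simp: cadlag_on_def)
      then show "((\<lambda>s. X w s - Y w s) \<longlongrightarrow> X w t - Y w t) (at_right t)"
        by (intro tendsto_diff)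
    qed
    interpret S: sp M F T "\<lambda>w s. X w s - Y w s" by (rule spI)
    have fe: "S.fD D = (\<lambda>w. min (norm (sprd_int D (\<lambda>w s. X w s - Y w s) w T)) 1)" for D
      by (simp add: fun_eq_iff S.fD_def)
    have ge: "S.gD D = (\<lambda>w. SUP t\<in>{0..T}. min (norm (sprd_int D (\<lambda>w s. X w s - Y w s) w t)) 1)" for D
      by (simp add: fun_eq_iff S.gD_def)
    have r: "rho_em M F T X Y = S.rho" by (simp add: rho_em_def S.rho_def fe)
    have d: "d_em M F T X Y = S.dd" by (simp add: d_em_def S.dd_def ge)
    show ?thesis unfolding r d using S.rho_le_dd S.dd_bound by auto
  qed
  show ?thesis unfolding Ceq
  proof (intro allI iffI)
    fix U assume o: "pm_open C (rho_em M F T) U"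
    show "pm_open C (d_em M F T) U"
      unfolding pm_open_def
    proof (intro conjI ballI)
      show "U \<subseteq> C" using o by (simp add: pm_open_def)
      fix x assume x: "x \<in> U"
      then obtain e where e: "e > 0" "\<forall>y\<in>C. rho_em M F T x y < e \<longrightarrow> y \<in> U"
        using o by (auto simp: pm_open_def)
      have xC: "x \<in> C" using o x by (auto simp: pm_open_def)
      show "\<exists>e>0. \<forall>y\<in>C. d_em M F T x y < e \<longrightarrow> y \<in> U"
        using e key[OF xC] by (intro exI[of _ e]) force
    qed
  next
    fix U assume o: "pm_open C (d_em M F T) U"
    show "pm_open C (rho_em M F T) U"
      unfolding pm_open_def
    proof (intro conjI ballI)
      show "U \<subseteq> C" using o by (simp add: pm_open_def)
      fix x assume x: "x \<in> U"
      then obtain e where e: "e > 0" "\<forall>y\<in>C. d_em M F T x y < e \<longrightarrow> y \<in> U"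
        using o by (auto simp: pm_open_def)
      have xC: "x \<in> C" using o x by (auto simp: pm_open_def)
      define \<epsilon> where "\<epsilon> = min 1 (e / 3)"
      have ep: "0 < \<epsilon>" "\<epsilon> \<le> 1" "\<epsilon> \<le> e / 3" using e by (auto simp: \<epsilon>_def)
      show "\<exists>e>0. \<forall>y\<in>C. rho_em M F T x y < e \<longrightarrow> y \<in> U"
      proof (intro exI[of _ "\<epsilon> * \<epsilon>"] conjI ballI impI)
        show "0 < \<epsilon> * \<epsilon>" using ep by simp
        fix y assume y: "y \<in> C" and ry: "rho_em M F T x y < \<epsilon> * \<epsilon>"
        have "d_em M F T x y \<le> \<epsilon> + rho_em M F T x y / \<epsilon>" using key[OF xC y] ep by auto
        also have "rho_em M F T x y / \<epsilon> < \<epsilon>" using ry ep by (simp add: divide_less_eq)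
        finally have "d_em M F T x y < e" using ep by linarith
        then show "y \<in> U" using e y by auto
      qed
    qed
  qed
qed

end
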